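(* For any positive integer $k$ and any $\underline{\zeta}\in\mathbb{R}^k$ we have \[ \lambda_{k,1}(\underline{\zeta})=\infty \quad\Longleftrightarrow\quad \widehat{\lambda}_{k,2}(\underline{\zeta})=\widehat{\lambda}_{k,3}(\underline{\zeta})=\cdots=\widehat{\lambda}_{k,k+1}(\underline{\zeta})=0. \]
   Context: For $\underline{\zeta}=(\zeta_1,\ldots,\zeta_k)\in\mathbb{R}^k$ and $1\leq j\leq k+1$, $\lambda_{k,j}(\underline{\zeta})$ (resp. $\widehat{\lambda}_{k,j}(\underline{\zeta})$) is the supremum of all $\eta\in\mathbb{R}$ such that the system $|x|\leq X$, $\max_{1\leq i\leq k}|\zeta_i x-y_i|\leq X^{-\eta}$ has at least $j$ linearly independent solutions $(x,y_1,\ldots,y_k)\in\mathbb{Z}^{k+1}$ for arbitrarily large real $X$ (resp. for all sufficiently large real $X$). *)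

theory Defs
  imports Complex_Main "HOL-Library.Extended_Real"
begin

text \<open>zeta is represented as a function nat => real; only zeta 1, ..., zeta k matter.
  An integer point (x, y_1, ..., y_k) is a function v :: nat => int with v 0 = x, v i = y_i.\<close>

definition approx_sol :: "nat \<Rightarrow> (nat \<Rightarrow> real) \<Rightarrow> real \<Rightarrow> real \<Rightarrow> (nat \<Rightarrow> int) \<Rightarrow> bool" where
  "approx_sol k \<zeta> X \<eta> v \<longleftrightarrow>
     \<bar>real_of_int (v 0)\<bar> \<le> X \<and>
     (\<forall>i\<in>{1..k}. \<bar>\<zeta> i * real_of_int (v 0) - real_of_int (v i)\<bar> \<le> X powr (-\<eta>))"

definition lin_indep_pts :: "nat \<Rightarrow> nat \<Rightarrow> (nat \<Rightarrow> nat \<Rightarrow> int) \<Rightarrow> bool" where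
  "lin_indep_pts k j vs \<longleftrightarrow>
     (\<forall>c :: nat \<Rightarrow> real. (\<forall>t\<le>k. (\<Sum>l<j. c l * real_of_int (vs l t)) = 0) \<longrightarrow> (\<forall>l<j. c l = 0))"

definition has_indep_sols :: "nat \<Rightarrow> (nat \<Rightarrow> real) \<Rightarrow> nat \<Rightarrow> real \<Rightarrow> real \<Rightarrow> bool" where
  "has_indep_sols k \<zeta> j X \<eta> \<longleftrightarrow>
     (\<exists>vs. lin_indep_pts k j vs \<and> (\<forall>l<j. approx_sol k \<zeta> X \<eta> (vs l)))"

definition lambda_exp :: "nat \<Rightarrow> nat \<Rightarrow> (nat \<Rightarrow> real) \<Rightarrow> ereal" where
  "lambda_exp k j \<zeta> = Sup {ereal \<eta> | \<eta>. \<exists>\<^sub>F X in at_top. has_indep_sols k \<zeta> j X \<eta>}"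

definition lambda_hat_exp :: "nat \<Rightarrow> nat \<Rightarrow> (nat \<Rightarrow> real) \<Rightarrow> ereal" where
  "lambda_hat_exp k j \<zeta> = Sup {ereal \<eta> | \<eta>. \<forall>\<^sub>F X in at_top. has_indep_sols k \<zeta> j X \<eta>}"

end

theory Submission imports Defs "HOL-Analysis.Kronecker_Approximation_Theorem" begin

lemma ev_powr_ge:
  assumes "b > 0"
  shows "eventually (\<lambda>X::real. C \<le> X powr b) at_top"
proof -
  define X0 where "X0 = max 1 (\<bar>C\<bar> powr (1/b))"
  have "C \<le> X powr b" if "X \<ge> X0" for X
  proof (cases "C > 0")
    case True
    have "C = (\<bar>C\<bar> powr (1/b)) powr b" using True assms by (simp add: powr_powr)
    also have "\<dots> \<le> X powr b" using that assms by (intro powr_mono2) (auto simp: X0_def)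
    finally show ?thesis .
  next
    case False
    then show ?thesis by (smt (verit) powr_ge_zero)
  qed
  then show ?thesis unfolding eventually_at_top_linorder by blast
qed

lemma ev_powr_cmp:
  assumes "t < s"
  shows "eventually (\<lambda>X::real. C * X powr (-s) \<le> X powr (-t)) at_top"
proof -
  have "eventually (\<lambda>X::real. C \<le> X powr (s - t) \<and> X > 0) at_top"
    using ev_powr_ge[OF _, of "s-t" C] assms eventually_gt_at_top[of 0]
    by (auto intro: eventually_conj)
  then show ?thesis
  proof (rule eventually_mono)
    fix X :: real assume h: "C \<le> X powr (s - t) \<and> X > 0"
    have "C * X powr (-s) \<le> X powr (s-t) * X powr (-s)"
      using h by (intro mult_right_mono) auto
    also have "\<dots> = X powr (-t)" using h by (simp add: powr_add[symmetric])
    finally show "C * X powr (-s) \<le> X powr (-t)" .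
  qed
qed

lemma dirichlet:
  fixes \<zeta> :: "nat \<Rightarrow> real" and X :: real
  assumes "X \<ge> 1"
  shows "\<exists>v::nat\<Rightarrow>int. 1 \<le> v 0 \<and> real_of_int (v 0) \<le> X \<and>
     (\<forall>i\<in>{1..k}. \<bar>\<zeta> i * real_of_int (v 0) - real_of_int (v i)\<bar> \<le> 2 * X powr (-(1/(real k+1))))"
proof -
  define a :: real where "a = 1 / (real k + 1)"
  have a: "a > 0" "a \<le> 1" by (auto simp: a_def)
  define N where "N = nat \<lfloor>X powr a\<rfloor>"
  have Xa: "X powr a \<ge> 1" using assms a by (simp add: ge_one_powr_ge_zero)
  have N1: "N \<ge> 1" using Xa by (simp add: N_def le_nat_iff)
  have NX: "real N \<le> X powr a" using Xa by (simp add: N_def)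
  have RN: "real N = of_int \<lfloor>X powr a\<rfloor>" using Xa by (simp add: N_def)
  have "X powr a < real N + 1" unfolding RN by linarith
  then have NX2: "X powr a \<le> 2 * real N" using N1 by linarith
  obtain q p where q: "0<q" "q \<le> int (N^(k+1))"
    and qp: "\<And>i. i<k+1 \<Longrightarrow> \<bar>of_int q * \<zeta> i - of_int(p i)\<bar> < 1/N"
    using Dirichlet_approx_simult[where N=N and \<theta>=\<zeta> and n="k+1"] N1 by auto
  define v where "v = (\<lambda>i. if i = 0 then q else p i)"
  have "real (N^(k+1)) = real N ^ (k+1)" by simp
  also have "\<dots> \<le> (X powr a) ^ (k+1)" using NX by (intro power_mono) auto
  also have "\<dots> = (X powr a) powr real (k+1)" using assms by (subst powr_realpow) auto
  also have "\<dots> = X powr (a * real (k+1))" by (simp add: powr_powr)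
  also have "a * real (k+1) = 1" by (simp add: a_def)
  also have "X powr 1 = X" using assms by simp
  finally have qX: "real_of_int q \<le> X" using q by linarith
  have "1 / real N \<le> 2 * X powr (-a)"
  proof -
    have "X powr (-a) = 1 / X powr a" using assms by (simp add: powr_minus divide_inverse)
    moreover have P: "X powr a > 0" using Xa by linarith
    moreover have "1 / real N = 2 / (2 * real N)" using N1 by simp
    moreover have "2 / (2 * real N) \<le> 2 / X powr a"
    proof (rule divide_left_mono)
      show "0 < 2 * real N * X powr a" using N1 P by simp
    qed (use NX2 in auto)
    ultimately show ?thesis by simp
  qed
  then have B: "1 / real N \<le> 2 * X powr (-(1/(real k+1)))" unfolding a_def .
  have "\<forall>i\<in>{1..k}. \<bar>\<zeta> i * real_of_int (v 0) - real_of_int (v i)\<bar> \<le> 2 * X powr (-(1/(real k+1)))"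
  proof
    fix i assume i: "i \<in> {1..k}"
    then have "\<bar>of_int q * \<zeta> i - of_int(p i)\<bar> < 1/N" using qp[of i] by auto
    moreover have "v 0 = q" "v i = p i" using i by (auto simp: v_def)
    ultimately show "\<bar>\<zeta> i * real_of_int (v 0) - real_of_int (v i)\<bar> \<le> 2 * X powr (-(1/(real k+1)))"
      using B by (simp add: mult.commute)
  qed
  then show ?thesis using q qX by (intro exI[of _ v]) (auto simp: v_def)
qed

lemma dep_contra:
  assumes w0: "w 0 \<noteq> (0::int)"
    and rel: "\<And>l t. l < 2 \<Longrightarrow> t \<le> k \<Longrightarrow> w 0 * vs l t = vs l 0 * w t"
    and ind: "lin_indep_pts k 2 vs"
  shows False
proof (cases "vs 0 0 = 0")
  case True
  have z: "vs 0 t = 0" if "t \<le> k" for t using rel[of 0 t] that True w0 by simp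
  define c :: "nat \<Rightarrow> real" where "c = (\<lambda>l. if l = 0 then 1 else 0)"
  have "\<forall>t\<le>k. (\<Sum>l<2. c l * real_of_int (vs l t)) = 0"
    using z by (simp add: c_def numeral_2_eq_2)
  then have "\<forall>l<2. c l = 0" using ind unfolding lin_indep_pts_def by blast
  then have "c 0 = 0" by simp
  then show False by (simp add: c_def)
next
  case False
  define c :: "nat \<Rightarrow> real" where "c = (\<lambda>l. if l = 0 then real_of_int (vs 1 0) else - real_of_int (vs 0 0))"
  have "(\<Sum>l<2. c l * real_of_int (vs l t)) = 0" if "t \<le> k" for t
  proof -
    have "w 0 * (vs 1 0 * vs 0 t - vs 0 0 * vs 1 t) = vs 1 0 * (w 0 * vs 0 t) - vs 0 0 * (w 0 * vs 1 t)"
      by (simp add: algebra_simps)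
    also have "\<dots> = vs 1 0 * (vs 0 0 * w t) - vs 0 0 * (vs 1 0 * w t)"
      using rel[of 0 t] rel[of 1 t] that by simp
    also have "\<dots> = 0" by (simp add: algebra_simps)
    finally have e: "w 0 * (vs 1 0 * vs 0 t - vs 0 0 * vs 1 t) = 0" .
    then have "vs 1 0 * vs 0 t - vs 0 0 * vs 1 t = 0" using w0 by simp
    then have "real_of_int (vs 1 0 * vs 0 t - vs 0 0 * vs 1 t) = 0" by simp
    then show ?thesis by (simp add: c_def numeral_2_eq_2 algebra_simps)
  qed
  then have "\<forall>l<2. c l = 0" using ind unfolding lin_indep_pts_def by blast
  then have "c 1 = 0" by simp
  then show False using False by (simp add: c_def)
qed

lemma int_rel:
  fixes \<zeta> :: "nat \<Rightarrow> real"
  assumes "\<bar>real_of_int (v 0)\<bar> \<le> X" "\<bar>real_of_int (w 0)\<bar> \<le> X'"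
    "\<bar>\<zeta> i * real_of_int (v 0) - real_of_int (v i)\<bar> \<le> Ev"
    "\<bar>\<zeta> i * real_of_int (w 0) - real_of_int (w i)\<bar> \<le> Ew"
    "X * Ew + X' * Ev < 1" "Ev \<ge> 0" "Ew \<ge> 0"
  shows "w 0 * v i = v 0 * w i"
proof -
  define n where "n = v 0 * w i - w 0 * v i"
  have "real_of_int n = - real_of_int (v 0) * (\<zeta> i * real_of_int (w 0) - real_of_int (w i))
      + real_of_int (w 0) * (\<zeta> i * real_of_int (v 0) - real_of_int (v i))"
    by (simp add: n_def algebra_simps)
  also have "\<bar>\<dots>\<bar> \<le> \<bar>real_of_int (v 0)\<bar> * Ew + \<bar>real_of_int (w 0)\<bar> * Ev"
  proof -
    have "\<bar>real_of_int (v 0)\<bar> * \<bar>\<zeta> i * real_of_int (w 0) - real_of_int (w i)\<bar> \<le> \<bar>real_of_int (v 0)\<bar> * Ew"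
      using assms by (intro mult_left_mono) auto
    moreover have "\<bar>real_of_int (w 0)\<bar> * \<bar>\<zeta> i * real_of_int (v 0) - real_of_int (v i)\<bar> \<le> \<bar>real_of_int (w 0)\<bar> * Ev"
      using assms by (intro mult_left_mono) auto
    moreover note abs_triangle_ineq[of "- real_of_int (v 0) * (\<zeta> i * real_of_int (w 0) - real_of_int (w i))"
       "real_of_int (w 0) * (\<zeta> i * real_of_int (v 0) - real_of_int (v i))"]
    ultimately show ?thesis by (simp only: abs_mult abs_minus_cancel)
  qed
  also have "\<dots> \<le> X * Ew + X' * Ev"
    using assms by (intro add_mono mult_right_mono) auto
  finally have "\<bar>n\<bar> < 1" using assms by linarith
  then have "n = 0" by linarith
  then show ?thesis by (simp add: n_def)
qed

lemma rev_dir: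
  fixes \<zeta> :: "nat \<Rightarrow> real"
  assumes M: "M \<ge> 1" and nf: "\<not> (\<exists>\<^sub>F X in at_top. has_indep_sols k \<zeta> 1 X M)"
  shows "\<exists>\<eta>>0. \<forall>\<^sub>F X in at_top. has_indep_sols k \<zeta> 2 X \<eta>"
proof -
  define a :: real where "a = 1 / (real k + 1)"
  define c where "c = a / (2 * (M + 1))"
  define \<eta> where "\<eta> = c * a / 2"
  have a: "a > 0" "a \<le> 1" by (auto simp: a_def)
  have c1: "c > 0" using a M by (simp add: c_def)
  have c2: "c * (M+1) = a / 2" using M by (simp add: c_def field_simps)
  have "c \<le> c * (M+1)" using c1 M by simp
  then have c: "c > 0" "c * (M+1) = a / 2" "c < a" using c1 c2 a by auto
  have \<eta>: "\<eta> > 0" "\<eta> < a" "\<eta> < c * a" using a c by (auto simp: \<eta>_def field_simps)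
  have nf': "\<forall>\<^sub>F X in at_top. \<not> has_indep_sols k \<zeta> 1 X M" using nf
    by (simp add: not_frequently)
  then obtain X0 where X0: "\<And>X. X \<ge> X0 \<Longrightarrow> \<not> has_indep_sols k \<zeta> 1 X M"
    unfolding eventually_at_top_linorder by blast
  have ev: "\<forall>\<^sub>F X in at_top. X \<ge> 1 \<and> X0 \<le> X powr c \<and> 2 * X powr (-a) \<le> X powr (-\<eta>)
       \<and> 2 * X powr (-(c*a)) \<le> X powr (-\<eta>) \<and> 2 * X powr (-(a - c)) \<le> X powr (-(c*M))"
    using eventually_ge_at_top[of 1] ev_powr_ge[OF c(1), of X0] ev_powr_cmp[OF \<eta>(2), of 2]
      ev_powr_cmp[OF \<eta>(3), of 2] ev_powr_cmp[of "c*M" "a - c" 2] c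
    by (auto intro!: eventually_conj simp: algebra_simps)
  have "\<forall>\<^sub>F X in at_top. has_indep_sols k \<zeta> 2 X \<eta>"
    using ev
  proof (rule eventually_mono)
    fix X :: real
    assume h: "X \<ge> 1 \<and> X0 \<le> X powr c \<and> 2 * X powr (-a) \<le> X powr (-\<eta>)
       \<and> 2 * X powr (-(c*a)) \<le> X powr (-\<eta>) \<and> 2 * X powr (-(a - c)) \<le> X powr (-(c*M))"
    have X1: "X \<ge> 1" using h by simp
    define Y where "Y = X powr c"
    have Y1: "Y \<ge> 1" using X1 c by (simp add: Y_def ge_one_powr_ge_zero)
    have "X powr c \<le> X powr 1" using X1 c a by (intro powr_mono) auto
    then have YX: "Y \<le> X" using X1 by (simp add: Y_def)
    obtain v1 where v1: "1 \<le> v1 0" "real_of_int (v1 0) \<le> X"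
      "\<forall>i\<in>{1..k}. \<bar>\<zeta> i * real_of_int (v1 0) - real_of_int (v1 i)\<bar> \<le> 2 * X powr (-a)"
      using dirichlet[OF X1, of k \<zeta>] unfolding a_def by blast
    obtain v2 where v2: "1 \<le> v2 0" "real_of_int (v2 0) \<le> Y"
      "\<forall>i\<in>{1..k}. \<bar>\<zeta> i * real_of_int (v2 0) - real_of_int (v2 i)\<bar> \<le> 2 * Y powr (-a)"
      using dirichlet[OF Y1, of k \<zeta>] unfolding a_def by blast
    have Ya: "Y powr (-a) = X powr (-(c*a))" using X1 by (simp add: Y_def powr_powr)
    define vs where "vs = (\<lambda>l::nat. if l = 0 then v1 else v2)"
    have ind: "lin_indep_pts k 2 vs"
      unfolding lin_indep_pts_def
    proof (intro allI impI)
      fix d :: "nat \<Rightarrow> real" and l :: nat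
      assume sums: "\<forall>t\<le>k. (\<Sum>l<2. d l * real_of_int (vs l t)) = 0" and l: "l < 2"
      have st: "d 0 * real_of_int (v1 t) + d 1 * real_of_int (v2 t) = 0" if "t \<le> k" for t
        using sums that by (simp add: vs_def numeral_2_eq_2)
      have s0: "d 0 * real_of_int (v1 0) + d 1 * real_of_int (v2 0) = 0" using st[of 0] by simp
      show "d l = 0"
      proof (rule ccontr)
        assume "d l \<noteq> 0"
        then have d0: "d 0 \<noteq> 0" and d1: "d 1 \<noteq> 0" using s0 v1(1) v2(1) l
          by (auto simp: less_2_cases_iff)
        have err: "\<bar>\<zeta> i * real_of_int (v2 0) - real_of_int (v2 i)\<bar> \<le> 2 * X powr (-(a - c))"
          if i: "i \<in> {1..k}" for i
        proof -
          define e1 where "e1 = \<zeta> i * real_of_int (v1 0) - real_of_int (v1 i)"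
          define e2 where "e2 = \<zeta> i * real_of_int (v2 0) - real_of_int (v2 i)"
          have "d 0 * e1 + d 1 * e2 = \<zeta> i * (d 0 * real_of_int (v1 0) + d 1 * real_of_int (v2 0))
              - (d 0 * real_of_int (v1 i) + d 1 * real_of_int (v2 i))"
            by (simp add: e1_def e2_def algebra_simps)
          also have "\<dots> = 0" using s0 st[of i] i by simp
          finally have de: "d 0 * e1 + d 1 * e2 = 0" .
          have r: "e2 = e1 * (- d 0 / d 1)" using de d1 by (simp add: field_simps)
          have q: "- d 0 / d 1 = real_of_int (v2 0) / real_of_int (v1 0)"
            using s0 d1 v1(1) by (simp add: field_simps)
          have "e2 = e1 * (real_of_int (v2 0) / real_of_int (v1 0))"
            using r unfolding q .
          then have "\<bar>e2\<bar> = \<bar>e1\<bar> * (real_of_int (v2 0) / real_of_int (v1 0))"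
            using v1(1) v2(1) by (simp add: abs_mult)
          also have "\<dots> \<le> \<bar>e1\<bar> * real_of_int (v2 0)"
            using v1(1) v2(1) by (intro mult_left_mono) (auto simp: divide_le_eq)
          also have "\<dots> \<le> (2 * X powr (-a)) * X powr c"
            using v1(3) i v2(2) v2(1) by (intro mult_mono) (auto simp: e1_def Y_def)
          also have "\<dots> = 2 * X powr (-(a - c))" using X1 by (simp add: powr_add[symmetric])
          finally show ?thesis by (simp add: e2_def)
        qed
        have "has_indep_sols k \<zeta> 1 Y M"
          unfolding has_indep_sols_def
        proof (intro exI[of _ "\<lambda>_. v2"] conjI allI impI)
          show "lin_indep_pts k 1 (\<lambda>_. v2)" unfolding lin_indep_pts_def
            using v2(1) by (auto)
          fix l :: nat assume "l < 1"
          have "Y powr (-M) = X powr (-(c*M))" using X1 by (simp add: Y_def powr_powr)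
          then show "approx_sol k \<zeta> Y M v2"
            unfolding approx_sol_def using v2(1,2) err h by force
        qed
        moreover have "Y \<ge> X0" using h by (simp add: Y_def)
        ultimately show False using X0 by blast
      qed
    qed
    show "has_indep_sols k \<zeta> 2 X \<eta>"
      unfolding has_indep_sols_def
    proof (intro exI[of _ vs] conjI allI impI ind)
      fix l :: nat assume l: "l < 2"
      show "approx_sol k \<zeta> X \<eta> (vs l)"
      proof (cases "l = 0")
        case True
        then show ?thesis unfolding approx_sol_def vs_def using v1 h by force
      next
        case False
        then show ?thesis unfolding approx_sol_def vs_def using v2 h Ya YX by force
      qed
    qed
  qed
  then show ?thesis using \<eta> by blast
qed

lemma restrict2:
  assumes "has_indep_sols k \<zeta> j X \<eta>" "2 \<le> j"
  shows "has_indep_sols k \<zeta> 2 X \<eta>"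
proof -
  obtain vs where vs: "lin_indep_pts k j vs" "\<forall>l<j. approx_sol k \<zeta> X \<eta> (vs l)"
    using assms(1) unfolding has_indep_sols_def by blast
  have "lin_indep_pts k 2 vs" unfolding lin_indep_pts_def
  proof (intro allI impI)
    fix c :: "nat \<Rightarrow> real" and l :: nat
    assume h: "\<forall>t\<le>k. (\<Sum>l<2. c l * real_of_int (vs l t)) = 0" "l < 2"
    define c' where "c' = (\<lambda>l. if l < 2 then c l else 0)"
    have "(\<Sum>l<j. c' l * real_of_int (vs l t)) = (\<Sum>l<2. c l * real_of_int (vs l t))" for t
    proof -
      have "(\<Sum>l<j. c' l * real_of_int (vs l t)) = (\<Sum>l<2. c' l * real_of_int (vs l t))"
        using assms(2) by (intro sum.mono_neutral_right) (auto simp: c'_def)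
      then show ?thesis by (simp add: c'_def)
    qed
    then have "\<forall>l<j. c' l = 0" using vs(1) h(1) unfolding lin_indep_pts_def by metis
    then show "c l = 0" using h(2) assms(2) unfolding c'_def by (metis less_le_trans)
  qed
  then show ?thesis using vs(2) assms(2) unfolding has_indep_sols_def by auto
qed

lemma hat_ge:
  fixes \<zeta> :: "nat \<Rightarrow> real"
  assumes "j \<le> k + 1" "\<eta> < 0"
  shows "\<forall>\<^sub>F X in at_top. has_indep_sols k \<zeta> j X \<eta>"
proof -
  define B where "B = (\<Sum>i\<in>{1..k}. \<bar>\<zeta> i\<bar>) + 1"
  define vs :: "nat \<Rightarrow> nat \<Rightarrow> int" where "vs = (\<lambda>l t. if t = l then 1 else 0)"
  have li: "lin_indep_pts k j vs" unfolding lin_indep_pts_def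
  proof (intro allI impI)
    fix c :: "nat \<Rightarrow> real" and l :: nat
    assume h: "\<forall>t\<le>k. (\<Sum>l<j. c l * real_of_int (vs l t)) = 0" "l < j"
    have "(\<Sum>l'<j. c l' * real_of_int (vs l' l)) = c l"
      using h(2) by (simp add: vs_def if_distrib cong: if_cong)
    then show "c l = 0" using h assms(1) by force
  qed
  have "\<forall>\<^sub>F X in at_top. X \<ge> 1 \<and> B \<le> X powr (-\<eta>)"
    using eventually_ge_at_top[of 1] ev_powr_ge[of "-\<eta>" B] assms(2)
    by (auto intro: eventually_conj)
  then show ?thesis
  proof (rule eventually_mono)
    fix X :: real assume X: "X \<ge> 1 \<and> B \<le> X powr (-\<eta>)"
    have "approx_sol k \<zeta> X \<eta> (vs l)" for l
      unfolding approx_sol_def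
    proof (intro conjI ballI)
      show "\<bar>real_of_int (vs l 0)\<bar> \<le> X" using X by (simp add: vs_def)
      fix i assume i: "i \<in> {1..k}"
      have z: "\<bar>\<zeta> i\<bar> \<le> (\<Sum>i\<in>{1..k}. \<bar>\<zeta> i\<bar>)"
        using i by (intro member_le_sum) auto
      have "\<bar>\<zeta> i * real_of_int (vs l 0) - real_of_int (vs l i)\<bar> \<le> \<bar>\<zeta> i\<bar> + 1"
        by (auto simp: vs_def)
      also have "\<dots> \<le> B" using z by (simp add: B_def)
      finally show "\<bar>\<zeta> i * real_of_int (vs l 0) - real_of_int (vs l i)\<bar> \<le> X powr - \<eta>"
        using X by linarith
    qed
    then show "has_indep_sols k \<zeta> j X \<eta>" using li unfolding has_indep_sols_def by blast
  qed
qed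

lemma fwd_le0:
  fixes \<zeta> :: "nat \<Rightarrow> real"
  assumes inf: "lambda_exp k 1 \<zeta> = \<infinity>" and j: "2 \<le> j" and \<eta>: "\<eta> > 0"
    and ev: "\<forall>\<^sub>F X in at_top. has_indep_sols k \<zeta> j X \<eta>"
  shows False
proof -
  have ev2: "\<forall>\<^sub>F X in at_top. has_indep_sols k \<zeta> 2 X \<eta>"
    using ev by (rule eventually_mono) (rule restrict2[OF _ j])
  then obtain X1 where X1: "\<And>X. X \<ge> X1 \<Longrightarrow> has_indep_sols k \<zeta> 2 X \<eta>"
    unfolding eventually_at_top_linorder by blast
  define N where "N = 2 / \<eta> + 2"
  have "1/\<eta> > 0" "2/\<eta> > 0" using \<eta> by auto
  then have N: "N > 0" "0 < N - 1/\<eta>" unfolding N_def by linarith+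
  have "\<exists>\<eta>'. \<eta>' \<ge> N \<and> (\<exists>\<^sub>F X in at_top. has_indep_sols k \<zeta> 1 X \<eta>')"
  proof (rule ccontr)
    assume neg: "\<not> ?thesis"
    have "lambda_exp k 1 \<zeta> \<le> ereal N" unfolding lambda_exp_def
    proof (intro Sup_least)
      fix x assume "x \<in> {ereal \<eta> |\<eta>. \<exists>\<^sub>F X in at_top. has_indep_sols k \<zeta> 1 X \<eta>}"
      then obtain e where "x = ereal e" "\<exists>\<^sub>F X in at_top. has_indep_sols k \<zeta> 1 X e" by blast
      then show "x \<le> ereal N" using neg by (cases "e \<ge> N") auto
    qed
    then show False using inf by simp
  qed
  then obtain \<eta>' where \<eta>': "\<eta>' \<ge> N" "\<exists>\<^sub>F X in at_top. has_indep_sols k \<zeta> 1 X \<eta>'" by blast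
  have mono: "has_indep_sols k \<zeta> 1 X N" if "X \<ge> 1" "has_indep_sols k \<zeta> 1 X \<eta>'" for X
  proof -
    have "X powr (-\<eta>') \<le> X powr (-N)" using that \<eta>' by (intro powr_mono) auto
    then show ?thesis using that(2) unfolding has_indep_sols_def approx_sol_def
      by (meson order.trans)
  qed
  define C where "C = 2 * 3 powr (1/\<eta>)"
  have e2: "\<forall>\<^sub>F X' in at_top. X1 \<le> X' powr (1/\<eta>)" using ev_powr_ge[of "1/\<eta>" X1] \<eta> by simp
  have e3: "\<forall>\<^sub>F X' in at_top. C * X' powr (-(N - 1/\<eta>)) \<le> X' powr (-0)" by (rule ev_powr_cmp[OF N(2)])
  have "\<forall>\<^sub>F X' in at_top. X' \<ge> 2 \<and> X1 \<le> X' powr (1/\<eta>) \<and> C * X' powr (-(N - 1/\<eta>)) \<le> 1"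
    using eventually_conj[OF eventually_ge_at_top[of 2] eventually_conj[OF e2 e3]]
    by (rule eventually_mono) auto
  from frequently_eventually_conj[OF \<eta>'(2) this]
  obtain X' where X': "X' \<ge> 2" "X1 \<le> X' powr (1/\<eta>)" "C * X' powr (-(N - 1/\<eta>)) \<le> 1"
    and h1: "has_indep_sols k \<zeta> 1 X' \<eta>'"
    by (auto dest: frequently_ex)
  from mono[OF _ h1] X' obtain ws where ws: "lin_indep_pts k 1 ws" "approx_sol k \<zeta> X' N (ws 0)"
    unfolding has_indep_sols_def by auto
  define w where "w = ws 0"
  have small: "X' powr (-N) < 1" using X' N by (intro powr_less_one) auto
  have w0: "w 0 \<noteq> 0"
  proof
    assume z: "w 0 = 0"
    have "w t = 0" if "t \<le> k" for t
    proof (cases "t = 0")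
      case True then show ?thesis using z by simp
    next
      case False
      then have "t \<in> {1..k}" using that by auto
      then have "\<bar>real_of_int (w t)\<bar> \<le> X' powr (-N)" using ws(2) z
        unfolding approx_sol_def w_def by force
      then show ?thesis using small by linarith
    qed
    then have "\<forall>t\<le>k. (\<Sum>l<1. (\<lambda>_. 1::real) l * real_of_int (ws l t)) = 0"
      by (simp add: w_def)
    then show False using ws(1) unfolding lin_indep_pts_def by force
  qed
  define X where "X = (3 * X') powr (1/\<eta>)"
  have "X' powr (1/\<eta>) \<le> X" unfolding X_def using X' \<eta> by (intro powr_mono2) auto
  then obtain vs where vs: "lin_indep_pts k 2 vs" "\<forall>l<2. approx_sol k \<zeta> X \<eta> (vs l)"
    using X1[of X] X'(2) unfolding has_indep_sols_def by auto
  have Xeta: "X powr (-\<eta>) = 1 / (3 * X')" using X' \<eta>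
    by (simp add: X_def powr_powr powr_minus_divide)
  have XN: "X * X' powr (-N) = 3 powr (1/\<eta>) * X' powr (-(N - 1/\<eta>))"
    using X' by (simp add: X_def powr_mult powr_add[symmetric])
  have bound: "X * X' powr (-N) + X' * X powr (-\<eta>) < 1"
  proof -
    have "X * X' powr (-N) \<le> 1/2" using XN X'(3) by (simp add: C_def)
    moreover have "X' * X powr (-\<eta>) = 1/3" using Xeta X' by simp
    ultimately show ?thesis by linarith
  qed
  have rel: "w 0 * vs l t = vs l 0 * w t" if l: "l < 2" and t: "t \<le> k" for l t
  proof (cases "t = 0")
    case True then show ?thesis by simp
  next
    case False
    then have i: "t \<in> {1..k}" using t by auto
    show ?thesis
      by (rule int_rel[where \<zeta> = \<zeta> and X = X and X' = X' and Ev = "X powr (-\<eta>)" and Ew = "X' powr (-N)"])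
        (use vs(2) l ws(2) i bound in \<open>auto simp: approx_sol_def w_def\<close>)
  qed
  show False by (rule dep_contra[OF w0 rel vs(1)])
qed

theorem lemma8:
  fixes k :: nat and \<zeta> :: "nat \<Rightarrow> real"
  assumes "k \<ge> 1"
  shows "lambda_exp k 1 \<zeta> = \<infinity> \<longleftrightarrow> (\<forall>j\<in>{2..k+1}. lambda_hat_exp k j \<zeta> = 0)"
proof
  assume inf: "lambda_exp k 1 \<zeta> = \<infinity>"
  show "\<forall>j\<in>{2..k+1}. lambda_hat_exp k j \<zeta> = 0"
  proof
    fix j assume j: "j \<in> {2..k+1}"
    have le: "lambda_hat_exp k j \<zeta> \<le> 0" unfolding lambda_hat_exp_def
    proof (intro Sup_least)
      fix x assume "x \<in> {ereal \<eta> |\<eta>. \<forall>\<^sub>F X in at_top. has_indep_sols k \<zeta> j X \<eta>}"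
      then obtain e where e: "x = ereal e" "\<forall>\<^sub>F X in at_top. has_indep_sols k \<zeta> j X e" by blast
      have "\<not> e > 0" using fwd_le0[OF inf _ _ e(2)] j by auto
      then show "x \<le> 0" using e(1) by (simp add: zero_ereal_def)
    qed
    have ge: "lambda_hat_exp k j \<zeta> \<ge> 0"
    proof (rule ccontr)
      assume "\<not> ?thesis"
      then have "lambda_hat_exp k j \<zeta> < 0" by simp
      then obtain z where z: "lambda_hat_exp k j \<zeta> < ereal z" "ereal z < 0"
        using ereal_dense2 by (metis zero_ereal_def)
      have "ereal z \<le> lambda_hat_exp k j \<zeta>" unfolding lambda_hat_exp_def
        using hat_ge[of j k z \<zeta>] j z(2) by (intro Sup_upper) (auto simp: zero_ereal_def)
      then show False using z(1) by simp
    qed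
    show "lambda_hat_exp k j \<zeta> = 0" using le ge by simp
  qed
next
  assume h: "\<forall>j\<in>{2..k+1}. lambda_hat_exp k j \<zeta> = 0"
  then have h2: "lambda_hat_exp k 2 \<zeta> = 0" using assms by auto
  have big: "ereal M \<le> lambda_exp k 1 \<zeta>" if M: "M \<ge> 1" for M
  proof (cases "\<exists>\<^sub>F X in at_top. has_indep_sols k \<zeta> 1 X M")
    case True
    then show ?thesis unfolding lambda_exp_def by (intro Sup_upper) auto
  next
    case False
    from rev_dir[OF M False] obtain \<eta> where \<eta>: "\<eta> > 0" "\<forall>\<^sub>F X in at_top. has_indep_sols k \<zeta> 2 X \<eta>"
      by blast
    have "ereal \<eta> \<le> lambda_hat_exp k 2 \<zeta>" unfolding lambda_hat_exp_def
      using \<eta>(2) by (intro Sup_upper) auto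
    then show ?thesis using h2 \<eta>(1) by simp
  qed
  show "lambda_exp k 1 \<zeta> = \<infinity>"
  proof (rule ccontr)
    assume ne: "lambda_exp k 1 \<zeta> \<noteq> \<infinity>"
    have "lambda_exp k 1 \<zeta> \<ge> ereal 1" using big by simp
    with ne obtain r where r: "lambda_exp k 1 \<zeta> = ereal r" by (cases "lambda_exp k 1 \<zeta>") auto
    have "ereal (max 1 (r + 1)) \<le> ereal r" using big[of "max 1 (r+1)"] r by simp
    then show False by simp
  qed
qed

end
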